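(* Let $G$ be a finite connected undirected weighted graph, unknown to the agents, with edge weights $w_e>0$ and $L=\sum_{e}w_e$. Two agents starting at the same node and both executing navigation table $T_{\mathrm{explo}}$ (described in the context) in the asynchronous model perform collective exploration of $G$ (every edge is traversed) while paying a total cost of at most $2L$, where traversing edge $e$ costs $w_e$.
   Context: Model. A passage (port) is an endpoint of an edge at one of its nodes. Each passage carries one marker; initially all passages are unmarked ($\emptyset$). The graph is unlabelled; an agent sees only the markers at its current node and remembers only the passage by which it arrived. A move of an agent at $u$: choose a passage at $u$ (or stop), possibly change its marker, traverse the edge to $v$, read the markers at $v$, possibly change the marker of the arrival passage. In the asynchronous model an adversary chooses, at each round, which agent performs a whole move. Navigation tables: ordered rows $(p_u,p_u',p_v,p_v')$; the agent takes the first row such that some passage at $u$ has marker $p_u$ (rows with equal $p_u$ are distinguished after arrival by the $p_v$ condition), sets that passage's marker to $p_u'$, traverses it, and sets the arrival passage's marker to $p_v'$; dash means any/unchanged; if no row applies the agent stops. A node is "discovered" if visited before. Table $T_{\mathrm{explo}}$ (priority order): (1) B, D, -, D; (2) $\emptyset$, E, E (arrival passage marked E), D; (3) $\emptyset$, E, $v$ discovered, B; (4) $\emptyset$, E, $v$ undiscovered, F; (5) F, D, -, D; (6) E, D, -, D. *)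

theory Defs
  imports Complex_Main
begin

datatype marker = Marker_Empty | Marker_B | Marker_D | Marker_E | Marker_F

text \<open>A passage (port) at node u of edge {u,v} is the pair (u,v); its opposite passage is (v,u).
  The node names are never used by the agents: the choice among passages carrying
  a given marker is arbitrary (nondeterministic, i.e. adversarial).\<close>

definition simple_graph :: "'v set \<Rightarrow> 'v set set \<Rightarrow> bool" where
  "simple_graph V E \<longleftrightarrow> finite V \<and>
     E \<subseteq> {{u, v} | u v. u \<in> V \<and> v \<in> V \<and> u \<noteq> v}"

definition adj :: "'v set set \<Rightarrow> ('v \<times> 'v) set" where
  "adj E = {(u, v). {u, v} \<in> E}"

definition connected_graph :: "'v set \<Rightarrow> 'v set set \<Rightarrow> bool" where
  "connected_graph V E \<longleftrightarrow> (\<forall>u\<in>V. \<forall>v\<in>V. (u, v) \<in> (adj E)\<^sup>*)"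

text \<open>Global configuration: markers of all passages, positions of the two agents
  (agents indexed by bool), the set of discovered (= already visited) nodes, the total
  cost paid so far and the set of edges traversed so far.\<close>
record 'v cfg =
  cfg_markers :: "'v \<times> 'v \<Rightarrow> marker"
  cfg_pos :: "bool \<Rightarrow> 'v"
  cfg_visited :: "'v set"
  cfg_cost :: real
  cfg_trav :: "'v set set"

definition init_cfg :: "'v \<Rightarrow> 'v cfg" where
  "init_cfg s = \<lparr> cfg_markers = (\<lambda>_. Marker_Empty), cfg_pos = (\<lambda>_. s),
                  cfg_visited = {s}, cfg_cost = 0, cfg_trav = {} \<rparr>"

definition has_marker :: "'v set set \<Rightarrow> 'v cfg \<Rightarrow> 'v \<Rightarrow> marker \<Rightarrow> bool" where
  "has_marker E c u m \<longleftrightarrow> (\<exists>v. {u, v} \<in> E \<and> cfg_markers c (u, v) = m)"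

definition traverse ::
  "('v set \<Rightarrow> real) \<Rightarrow> 'v cfg \<Rightarrow> bool \<Rightarrow> 'v \<Rightarrow> 'v \<Rightarrow> ('v \<times> 'v \<Rightarrow> marker) \<Rightarrow> 'v cfg" where
  "traverse w c a u v mk' =
     c\<lparr> cfg_markers := mk', cfg_pos := (cfg_pos c)(a := v),
        cfg_visited := insert v (cfg_visited c),
        cfg_cost := cfg_cost c + w {u, v},
        cfg_trav := insert {u, v} (cfg_trav c) \<rparr>"

text \<open>One whole move of agent a executing table T_explo (rows in priority order):
  (1) B, D, -, D; (2) Empty, E, E, D; (3) Empty, E, v discovered, B;
  (4) Empty, E, v undiscovered, F; (5) F, D, -, D; (6) E, D, -, D.\<close>
inductive explo_step ::
  "'v set set \<Rightarrow> ('v set \<Rightarrow> real) \<Rightarrow> bool \<Rightarrow> 'v cfg \<Rightarrow> 'v cfg \<Rightarrow> bool"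
  for E w where
  row1: "\<lbrakk> u = cfg_pos c a; {u, v} \<in> E; cfg_markers c (u, v) = Marker_B \<rbrakk> \<Longrightarrow>
     explo_step E w a c
       (traverse w c a u v ((cfg_markers c)((u, v) := Marker_D, (v, u) := Marker_D)))"
| row234: "\<lbrakk> u = cfg_pos c a; \<not> has_marker E c u Marker_B; {u, v} \<in> E;
      cfg_markers c (u, v) = Marker_Empty;
      mk1 = (cfg_markers c)((u, v) := Marker_E);
      arr = (if mk1 (v, u) = Marker_E then Marker_D
             else if v \<in> cfg_visited c then Marker_B else Marker_F) \<rbrakk> \<Longrightarrow>
     explo_step E w a c (traverse w c a u v (mk1((v, u) := arr)))"
| row5: "\<lbrakk> u = cfg_pos c a; \<not> has_marker E c u Marker_B; \<not> has_marker E c u Marker_Empty;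
      {u, v} \<in> E; cfg_markers c (u, v) = Marker_F \<rbrakk> \<Longrightarrow>
     explo_step E w a c
       (traverse w c a u v ((cfg_markers c)((u, v) := Marker_D, (v, u) := Marker_D)))"
| row6: "\<lbrakk> u = cfg_pos c a; \<not> has_marker E c u Marker_B; \<not> has_marker E c u Marker_Empty;
      \<not> has_marker E c u Marker_F; {u, v} \<in> E; cfg_markers c (u, v) = Marker_E \<rbrakk> \<Longrightarrow>
     explo_step E w a c
       (traverse w c a u v ((cfg_markers c)((u, v) := Marker_D, (v, u) := Marker_D)))"

text \<open>Asynchronous model: at each round the adversary picks an agent that performs a whole move.\<close>
definition async_step :: "'v set set \<Rightarrow> ('v set \<Rightarrow> real) \<Rightarrow> 'v cfg \<Rightarrow> 'v cfg \<Rightarrow> bool" where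
  "async_step E w c c' \<longleftrightarrow> (\<exists>a. explo_step E w a c c')"

end

theory Submission
  imports Defs
begin

definition okst :: "marker \<times> marker \<Rightarrow> bool" where
 "okst p \<longleftrightarrow> p \<in> {(Marker_Empty,Marker_Empty),(Marker_E,Marker_B),(Marker_B,Marker_E),
    (Marker_E,Marker_F),(Marker_F,Marker_E),(Marker_D,Marker_D)}"

definition Bset :: "'v set set \<Rightarrow> ('v \<times> 'v \<Rightarrow> marker) \<Rightarrow> 'v \<Rightarrow> 'v set" where
 "Bset E m z = {y. {z,y} \<in> E \<and> m (z,y) = Marker_B}"

definition nA :: "(bool \<Rightarrow> 'v) \<Rightarrow> 'v \<Rightarrow> nat" where
 "nA pos z = card {a. pos a = z}"

definition Wit :: "'v set set \<Rightarrow> ('v \<times> 'v \<Rightarrow> marker) \<Rightarrow> (bool \<Rightarrow> 'v) \<Rightarrow> 'v set" where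
 "Wit E m pos = {y. \<exists>z. {z,y} \<in> E \<and> m (z,y) = Marker_B} \<union> {z. card (Bset E m z) < nA pos z}"

definition needs :: "'v set set \<Rightarrow> ('v \<times> 'v \<Rightarrow> marker) \<Rightarrow> 'v set \<Rightarrow> 'v \<Rightarrow> bool" where
 "needs E m vis x \<longleftrightarrow> x \<in> vis \<and> (\<exists>y. {x,y} \<in> E \<and> (m (x,y) = Marker_Empty \<or> m (x,y) = Marker_F))"

definition ch :: "'v set set \<Rightarrow> ('v \<times> 'v \<Rightarrow> marker) \<Rightarrow> ('v \<times> 'v) set" where
 "ch E m = {(p,q). {p,q} \<in> E \<and> m (q,p) = Marker_F}"

definition val :: "marker \<Rightarrow> real" where
 "val M = (if M = Marker_E \<or> M = Marker_D then 1 else 0)"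

definition Pas :: "'v set set \<Rightarrow> ('v \<times> 'v) set" where
 "Pas E = {p. {fst p, snd p} \<in> E}"

definition expl_inv :: "'v set set \<Rightarrow> ('v set \<Rightarrow> real) \<Rightarrow> 'v \<Rightarrow> 'v cfg \<Rightarrow> bool" where
"expl_inv E w s c \<longleftrightarrow>
 (\<forall>u v. {u,v}\<in>E \<longrightarrow> okst (cfg_markers c (u,v), cfg_markers c (v,u))) \<and>
 (\<forall>u v. {u,v}\<in>E \<longrightarrow> cfg_markers c (u,v) \<noteq> Marker_Empty \<longrightarrow>
     u \<in> cfg_visited c \<and> v \<in> cfg_visited c \<and> {u,v} \<in> cfg_trav c) \<and>
 (\<forall>a. cfg_pos c a \<in> cfg_visited c) \<and> s \<in> cfg_visited c \<and>
 (\<forall>z. card (Bset E (cfg_markers c) z) \<le> nA (cfg_pos c) z) \<and>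
 (\<forall>x y y'. {x,y}\<in>E \<longrightarrow> {x,y'}\<in>E \<longrightarrow> cfg_markers c (x,y) = Marker_F \<longrightarrow>
     cfg_markers c (x,y') = Marker_F \<longrightarrow> y = y') \<and>
 (\<forall>x. needs E (cfg_markers c) (cfg_visited c) x \<longrightarrow>
     (\<exists>w'\<in>Wit E (cfg_markers c) (cfg_pos c). (x,w') \<in> (ch E (cfg_markers c))\<^sup>*)) \<and>
 cfg_cost c = (\<Sum>p\<in>Pas E. w {fst p, snd p} * val (cfg_markers c p))"

lemma sg_edge:
  assumes "simple_graph V E" "{x,y} \<in> E" shows "x \<in> V \<and> y \<in> V \<and> x \<noteq> y"
proof -
  from assms obtain a b where "{x,y} = {a,b}" "a \<in> V" "b \<in> V" "a \<noteq> b"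
    unfolding simple_graph_def by blast
  then show ?thesis by (auto simp: doubleton_eq_iff)
qed

lemma sg_finite: assumes "simple_graph V E" shows "finite E" "finite V"
proof -
  have "E \<subseteq> Pow V" using assms unfolding simple_graph_def by blast
  then show "finite E" using assms unfolding simple_graph_def by (meson finite_Pow_iff finite_subset)
  show "finite V" using assms unfolding simple_graph_def by blast
qed

lemma finite_Bset: assumes "simple_graph V E" shows "finite (Bset E m z)"
proof -
  have "Bset E m z \<subseteq> V" using sg_edge[OF assms] unfolding Bset_def by blast
  then show ?thesis using sg_finite[OF assms] finite_subset by blast
qed

lemma finite_Pas: assumes "simple_graph V E" shows "finite (Pas E)"
proof -
  have "Pas E \<subseteq> V \<times> V" using sg_edge[OF assms] unfolding Pas_def by force
  then show ?thesis using sg_finite[OF assms] finite_subset by blast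
qed

lemma okst_sym: "okst (X,Y) \<Longrightarrow> okst (Y,X)"
  unfolding okst_def by auto

lemma Bset_other: "z \<noteq> u \<Longrightarrow> z \<noteq> v \<Longrightarrow> Bset E (m((u,v):=X,(v,u):=Y)) z = Bset E m z"
  unfolding Bset_def by auto

lemma Bset_u: "u \<noteq> v \<Longrightarrow> X \<noteq> Marker_B \<Longrightarrow> Bset E (m((u,v):=X,(v,u):=Y)) u = Bset E m u - {v}"
  unfolding Bset_def by auto

lemma Bset_v: "u \<noteq> v \<Longrightarrow> Bset E (m((u,v):=X,(v,u):=Y)) v \<subseteq> insert u (Bset E m v)"
  unfolding Bset_def by auto

lemma Bset_v2: "u \<noteq> v \<Longrightarrow> Y \<noteq> Marker_B \<Longrightarrow> Bset E (m((u,v):=X,(v,u):=Y)) v \<subseteq> Bset E m v"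
  unfolding Bset_def by auto

lemma nA_other: assumes "pos a = u" "z \<noteq> u" "z \<noteq> v" shows "nA (pos(a:=v)) z = nA pos z"
proof -
  have "{b. (pos(a:=v)) b = z} = {b. pos b = z}"
  proof (intro Collect_cong)
    fix b show "((pos(a:=v)) b = z) = (pos b = z)"
      using assms by (cases "b = a") simp_all
  qed
  then show ?thesis unfolding nA_def by simp
qed

lemma nA_u: assumes "pos a = u" "u \<noteq> v"
  shows "nA (pos(a:=v)) u = nA pos u - 1" "nA pos u \<ge> 1"
proof -
  have "{b. (pos(a:=v)) b = u} = {b. pos b = u} - {a}"
  proof (intro set_eqI)
    fix b show "(b \<in> {b. (pos(a:=v)) b = u}) = (b \<in> {b. pos b = u} - {a})"
      using assms by (cases "b = a") simp_all
  qed
  then show "nA (pos(a:=v)) u = nA pos u - 1" unfolding nA_def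
    using assms by (simp add: card_Diff_singleton)
  have "a \<in> {b. pos b = u}" using assms by simp
  then have "card {b. pos b = u} > 0"
    using card_gt_0_iff by (metis empty_iff finite)
  then show "nA pos u \<ge> 1" unfolding nA_def by simp
qed

lemma nA_v: assumes "pos a = u" "u \<noteq> v"
  shows "nA (pos(a:=v)) v = nA pos v + 1"
proof -
  have "{b. (pos(a:=v)) b = v} = insert a {b. pos b = v}"
  proof (intro set_eqI)
    fix b show "(b \<in> {b. (pos(a:=v)) b = v}) = (b \<in> insert a {b. pos b = v})"
      using assms by (cases "b = a") simp_all
  qed
  moreover have "a \<notin> {b. pos b = v}" using assms by simp
  ultimately show ?thesis unfolding nA_def by simp
qed

lemma rtrancl_remove:
  assumes "(x,y) \<in> R\<^sup>*" shows "(x,y) \<in> (R - {(p,q)})\<^sup>* \<or> (x,p) \<in> (R - {(p,q)})\<^sup>*"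
  using assms
proof (induction rule: rtrancl_induct)
  case base then show ?case by simp
next
  case (step y z)
  show ?case
  proof (cases "(y,z) = (p,q)")
    case True then show ?thesis using step by auto
  next
    case False
    then have "(y,z) \<in> R - {(p,q)}" using step by auto
    then show ?thesis using step.IH by (meson rtrancl.rtrancl_into_rtrancl)
  qed
qed

lemma rtrancl_into_pred: "(x,y) \<in> R\<^sup>* \<Longrightarrow> x \<noteq> y \<Longrightarrow> \<exists>q. (q,y) \<in> R"
  by (metis rtranclE)

lemma Pas_sum_step:
  fixes f f' :: "'a \<times> 'a \<Rightarrow> real"
  assumes fin: "finite P" and uv: "(u,v) \<in> P" "(v,u) \<in> P" "u \<noteq> v"
    and oth: "\<And>p. p \<in> P \<Longrightarrow> p \<noteq> (u,v) \<Longrightarrow> p \<noteq> (v,u) \<Longrightarrow> f' p = f p"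
  shows "sum f' P = sum f P + (f' (u,v) - f (u,v)) + (f' (v,u) - f (v,u))"
proof -
  have d: "(v,u) \<in> P - {(u,v)}" using uv by auto
  have "sum f' P = f' (u,v) + sum f' (P - {(u,v)})"
    using fin uv by (simp add: sum.remove)
  also have "sum f' (P - {(u,v)}) = f' (v,u) + sum f' (P - {(u,v)} - {(v,u)})"
    using fin d by (simp add: sum.remove)
  also have "sum f' (P - {(u,v)} - {(v,u)}) = sum f (P - {(u,v)} - {(v,u)})"
    using oth by (intro sum.cong) auto
  finally have 1: "sum f' P = f' (u,v) + (f' (v,u) + sum f (P - {(u,v)} - {(v,u)}))" .
  have "sum f P = f (u,v) + sum f (P - {(u,v)})"
    using fin uv by (simp add: sum.remove)
  also have "sum f (P - {(u,v)}) = f (v,u) + sum f (P - {(u,v)} - {(v,u)})"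
    using fin d by (simp add: sum.remove)
  finally have 2: "sum f P = f (u,v) + (f (v,u) + sum f (P - {(u,v)} - {(v,u)}))" .
  from 1 2 show ?thesis by (simp add: algebra_simps)
qed

lemma step_generic:
  assumes G: "simple_graph V E" and I: "expl_inv E w s c" and pos: "cfg_pos c a = u"
    and e: "{u,v} \<in> E"
    and mdef: "m' = (cfg_markers c)((u,v):=X,(v,u):=Y)"
    and H1: "okst (X,Y)" and H2: "X = Marker_E \<or> X = Marker_D"
    and H3: "val X + val Y = val (cfg_markers c (u,v)) + val (cfg_markers c (v,u)) + 1"
    and H4: "Bset E (cfg_markers c) u = {} \<or> v \<in> Bset E (cfg_markers c) u"
    and H5: "Y = Marker_F \<Longrightarrow> (\<forall>y. {v,y}\<in>E \<longrightarrow> cfg_markers c (v,y) = Marker_Empty)"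
    and HP: "\<forall>x. needs E m' (insert v (cfg_visited c)) x \<longrightarrow>
               (\<exists>w'\<in>Wit E m' ((cfg_pos c)(a:=v)). (x,w') \<in> (ch E m')\<^sup>*)"
  shows "expl_inv E w s (traverse w c a u v m')"
proof -
  let ?m = "cfg_markers c"
  have uv: "u \<noteq> v" using sg_edge[OF G e] by blast
  have e2: "{v,u} \<in> E" using e by (simp add: insert_commute)
  note Ic = I[unfolded expl_inv_def]
  note I1 = Ic[THEN conjunct1, rule_format]
  note I2 = Ic[THEN conjunct2, THEN conjunct1, rule_format]
  note I3 = Ic[THEN conjunct2, THEN conjunct2, THEN conjunct1, rule_format]
  note I4 = Ic[THEN conjunct2, THEN conjunct2, THEN conjunct2, THEN conjunct1]
  note I5 = Ic[THEN conjunct2, THEN conjunct2, THEN conjunct2, THEN conjunct2, THEN conjunct1, rule_format]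
  note I6 = Ic[THEN conjunct2, THEN conjunct2, THEN conjunct2, THEN conjunct2, THEN conjunct2, THEN conjunct1, rule_format]
  note I8 = Ic[THEN conjunct2, THEN conjunct2, THEN conjunct2, THEN conjunct2, THEN conjunct2, THEN conjunct2, THEN conjunct2]
  have m'o: "\<And>x y. (x,y) \<noteq> (u,v) \<Longrightarrow> (x,y) \<noteq> (v,u) \<Longrightarrow> m' (x,y) = ?m (x,y)"
    unfolding mdef fun_upd_apply by presburger
  have m'uv: "m' (u,v) = X" "m' (v,u) = Y" using mdef uv by auto
  have J1: "\<forall>x y. {x,y}\<in>E \<longrightarrow> okst (m' (x,y), m' (y,x))"
  proof (intro allI impI)
    fix x y assume xy: "{x,y} \<in> E"
    show "okst (m' (x,y), m' (y,x))"
    proof (cases "(x,y) = (u,v) \<or> (x,y) = (v,u)")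
      case True then show ?thesis using m'uv H1 okst_sym by auto
    next
      case False
      then have "(y,x) \<noteq> (u,v)" "(y,x) \<noteq> (v,u)" by auto
      then show ?thesis using False m'o I1[OF xy] by auto
    qed
  qed
  have J2: "\<forall>x y. {x,y}\<in>E \<longrightarrow> m' (x,y) \<noteq> Marker_Empty \<longrightarrow>
      x \<in> insert v (cfg_visited c) \<and> y \<in> insert v (cfg_visited c) \<and> {x,y} \<in> insert {u,v} (cfg_trav c)"
  proof (intro allI impI)
    fix x y assume xy: "{x,y} \<in> E" and ne: "m' (x,y) \<noteq> Marker_Empty"
    show "x \<in> insert v (cfg_visited c) \<and> y \<in> insert v (cfg_visited c) \<and> {x,y} \<in> insert {u,v} (cfg_trav c)"
    proof (cases "(x,y) = (u,v) \<or> (x,y) = (v,u)")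
      case True then show ?thesis using I3[of a] pos by (auto simp: insert_commute)
    next
      case False
      then show ?thesis using m'o ne I2[OF xy] by auto
    qed
  qed
  have J5: "\<forall>z. card (Bset E m' z) \<le> nA ((cfg_pos c)(a:=v)) z"
  proof
    fix z
    have fB: "\<And>m z. finite (Bset E m z)" using finite_Bset[OF G] .
    show "card (Bset E m' z) \<le> nA ((cfg_pos c)(a:=v)) z"
    proof (cases "z = u")
      case True
      have XB: "X \<noteq> Marker_B" using H2 by auto
      have b: "Bset E m' u = Bset E ?m u - {v}" using Bset_u[OF uv XB] mdef by simp
      have "card (Bset E ?m u - {v}) \<le> nA (cfg_pos c) u - 1"
      proof (cases "Bset E ?m u = {}")
        case True then show ?thesis by simp
      next
        case False
        then have "v \<in> Bset E ?m u" using H4 by blast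
        then show ?thesis using I5[of u] fB by (simp add: card_Diff_singleton)
      qed
      then show ?thesis using True b nA_u[where pos="cfg_pos c", OF pos uv] by simp
    next
      case zu: False
      show ?thesis
      proof (cases "z = v")
        case True
        have "Bset E m' v \<subseteq> insert u (Bset E ?m v)" using Bset_v[OF uv] mdef by simp
        then have "card (Bset E m' v) \<le> card (insert u (Bset E ?m v))"
          using fB by (meson card_mono finite_insert)
        also have "\<dots> \<le> card (Bset E ?m v) + 1" using fB by (simp add: card_insert_if)
        finally show ?thesis using True I5[of v] nA_v[where pos="cfg_pos c", OF pos uv] by simp
      next
        case False
        then show ?thesis using zu Bset_other[OF zu False] mdef nA_other[where pos="cfg_pos c", OF pos zu False] I5[of z]
          by simp
      qed
    qed
  qed
  have J6: "\<forall>x y y'. {x,y}\<in>E \<longrightarrow> {x,y'}\<in>E \<longrightarrow> m' (x,y) = Marker_F \<longrightarrow>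
     m' (x,y') = Marker_F \<longrightarrow> y = y'"
  proof (intro allI impI)
    fix x y y' assume a1: "{x,y}\<in>E" "{x,y'}\<in>E" "m' (x,y) = Marker_F" "m' (x,y') = Marker_F"
    have gen: "\<And>y y'. {x,y}\<in>E \<Longrightarrow> {x,y'}\<in>E \<Longrightarrow> m' (x,y) = Marker_F \<Longrightarrow> m' (x,y') = Marker_F
       \<Longrightarrow> (x,y) = (v,u) \<Longrightarrow> y = y'"
    proof -
      fix y y' assume b: "{x,y}\<in>E" "{x,y'}\<in>E" "m' (x,y) = Marker_F" "m' (x,y') = Marker_F" "(x,y) = (v,u)"
      then have YF: "Y = Marker_F" using m'uv by simp
      show "y = y'"
      proof (rule ccontr)
        assume "y \<noteq> y'"
        then have "(x,y') \<noteq> (u,v)" "(x,y') \<noteq> (v,u)" using b uv by auto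
        then have "?m (x,y') = Marker_F" using m'o b by simp
        then show False using H5[OF YF] b by auto
      qed
    qed
    show "y = y'"
    proof (cases "(x,y) = (v,u)")
      case True then show ?thesis using gen a1 by blast
    next
      case F1: False
      show ?thesis
      proof (cases "(x,y') = (v,u)")
        case True then show ?thesis using gen[OF a1(2) a1(1) a1(4) a1(3)] by simp
      next
        case F2: False
        have "(x,y) \<noteq> (u,v)" "(x,y') \<noteq> (u,v)" using a1 m'uv H2 by auto
        then show ?thesis using F1 F2 m'o a1 I6 by metis
      qed
    qed
  qed
  have J8: "cfg_cost c + w {u,v} = (\<Sum>p\<in>Pas E. w {fst p, snd p} * val (m' p))"
  proof -
    have fP: "finite (Pas E)" using finite_Pas[OF G] .
    have inP: "(u,v) \<in> Pas E" "(v,u) \<in> Pas E" using e e2 unfolding Pas_def by auto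
    have "(\<Sum>p\<in>Pas E. w {fst p, snd p} * val (m' p)) =
       (\<Sum>p\<in>Pas E. w {fst p, snd p} * val (?m p))
        + (w {fst (u,v), snd (u,v)} * val (m' (u,v)) - w {fst (u,v), snd (u,v)} * val (?m (u,v)))
        + (w {fst (v,u), snd (v,u)} * val (m' (v,u)) - w {fst (v,u), snd (v,u)} * val (?m (v,u)))"
      apply (rule Pas_sum_step[OF fP inP uv])
      subgoal for p using m'o[of "fst p" "snd p"] by simp
      done
    also have "\<dots> = cfg_cost c + w {u,v}"
    proof -
      have "w {v,u} = w {u,v}" by (simp add: insert_commute)
      moreover have "(val X + val Y) * w {u,v} = (1 + val (?m (u,v)) + val (?m (v,u))) * w {u,v}"
        using H3 by simp
      ultimately show ?thesis using I8 m'uv by (simp add: algebra_simps)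
    qed
    finally show ?thesis by simp
  qed
  show ?thesis
    unfolding expl_inv_def traverse_def
    using J1 J2 J5 J6 J8 HP I3 I4 by (simp add: mdef[symmetric])
qed


lemma upd2_other: "p \<noteq> (u,v) \<Longrightarrow> p \<noteq> (v,u) \<Longrightarrow> (m((u,v):=X,(v,u):=Y)) p = m p"
  by (metis fun_upd_other)

lemma Wit_keep:
  assumes uv: "u \<noteq> v" and pos: "pos a = u" and wn: "w \<noteq> u" "w \<noteq> v"
    and wW: "w \<in> Wit E m pos"
  shows "w \<in> Wit E (m((u,v):=X,(v,u):=Y)) (pos(a:=v))"
proof -
  let ?m' = "m((u,v):=X,(v,u):=Y)"
  show ?thesis
  proof (cases "\<exists>z. {z,w} \<in> E \<and> m (z,w) = Marker_B")
    case True
    then obtain z where z: "{z,w} \<in> E" "m (z,w) = Marker_B" by blast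
    have "(z,w) \<noteq> (u,v)" "(z,w) \<noteq> (v,u)" using wn by auto
    then have "?m' (z,w) = m (z,w)" by (rule upd2_other)
    then have "?m' (z,w) = Marker_B" using z by simp
    then show ?thesis using z unfolding Wit_def by blast
  next
    case False
    then have "card (Bset E m w) < nA pos w" using wW unfolding Wit_def by blast
    moreover have "Bset E ?m' w = Bset E m w" using Bset_other[OF wn] .
    moreover have "nA (pos(a:=v)) w = nA pos w" using nA_other[where pos=pos, OF pos wn] .
    ultimately show ?thesis unfolding Wit_def by simp
  qed
qed

lemma v_Wit:
  assumes uv: "u \<noteq> v" and pos: "pos a = u" and le: "card (Bset E m v) \<le> nA pos v"
    and sub: "Bset E m' v \<subseteq> Bset E m v" and fin: "finite (Bset E m v)"
  shows "v \<in> Wit E m' (pos(a:=v))"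
proof -
  have "card (Bset E m' v) \<le> card (Bset E m v)" by (rule card_mono[OF fin sub])
  then have "card (Bset E m' v) < nA (pos(a:=v)) v" using le nA_v[where pos=pos, OF pos uv] by simp
  then show ?thesis unfolding Wit_def by blast
qed

lemma ch_DD:
  fixes m :: "'v \<times> 'v \<Rightarrow> marker"
  assumes "u \<noteq> v" "X \<noteq> Marker_F" "Y \<noteq> Marker_F"
  shows "ch E (m((u,v):=X,(v,u):=Y)) = ch E m - {(u,v),(v,u)}"
proof (intro set_eqI)
  fix p :: "'v \<times> 'v"
  obtain p1 p2 where p: "p = (p1,p2)" by fastforce
  show "p \<in> ch E (m((u,v):=X,(v,u):=Y)) \<longleftrightarrow> p \<in> ch E m - {(u,v),(v,u)}"
  proof (cases "p = (u,v) \<or> p = (v,u)")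
    case True then show ?thesis using assms unfolding ch_def p by auto
  next
    case False
    then have "(p2,p1) \<noteq> (u,v)" "(p2,p1) \<noteq> (v,u)" using p by auto
    then have "(m((u,v):=X,(v,u):=Y)) (p2,p1) = m (p2,p1)" by (rule upd2_other)
    then show ?thesis using False unfolding ch_def p by auto
  qed
qed

lemma into_pred_ch:
  assumes "(x,u) \<in> (ch E m)\<^sup>*" "x \<noteq> u"
  shows "\<exists>q. {u,q} \<in> E \<and> m (u,q) = Marker_F"
proof -
  obtain q where "(q,u) \<in> ch E m" using rtrancl_into_pred[OF assms] by blast
  then show ?thesis unfolding ch_def by (auto simp: insert_commute)
qed

lemma Wit_vis:
  assumes I: "expl_inv E w s c" and W: "x \<in> Wit E (cfg_markers c) (cfg_pos c)"
  shows "x \<in> cfg_visited c"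
proof -
  note Ic = I[unfolded expl_inv_def]
  note I2 = Ic[THEN conjunct2, THEN conjunct1, rule_format]
  note I3 = Ic[THEN conjunct2, THEN conjunct2, THEN conjunct1, rule_format]
  show ?thesis
  proof (cases "\<exists>z. {z,x} \<in> E \<and> cfg_markers c (z,x) = Marker_B")
    case True
    then obtain z where "{z,x} \<in> E" "cfg_markers c (z,x) = Marker_B" by blast
    then show ?thesis using I2 by fastforce
  next
    case False
    then have "card (Bset E (cfg_markers c) x) < nA (cfg_pos c) x" using W unfolding Wit_def by blast
    then have "{b. cfg_pos c b = x} \<noteq> {}" unfolding nA_def by (metis card.empty not_less0)
    then show ?thesis using I3 by auto
  qed
qed


lemma invD:
  assumes "expl_inv E w s c"
  shows "\<And>x y. {x,y}\<in>E \<Longrightarrow> okst (cfg_markers c (x,y), cfg_markers c (y,x))"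
    and "\<And>x y. {x,y}\<in>E \<Longrightarrow> cfg_markers c (x,y) \<noteq> Marker_Empty \<Longrightarrow>
             x \<in> cfg_visited c \<and> y \<in> cfg_visited c \<and> {x,y} \<in> cfg_trav c"
    and "\<And>a. cfg_pos c a \<in> cfg_visited c" and "s \<in> cfg_visited c"
    and "\<And>z. card (Bset E (cfg_markers c) z) \<le> nA (cfg_pos c) z"
    and "\<And>x y y'. {x,y}\<in>E \<Longrightarrow> {x,y'}\<in>E \<Longrightarrow> cfg_markers c (x,y) = Marker_F \<Longrightarrow>
            cfg_markers c (x,y') = Marker_F \<Longrightarrow> y = y'"
    and "\<And>x. needs E (cfg_markers c) (cfg_visited c) x \<Longrightarrow>
            (\<exists>w'\<in>Wit E (cfg_markers c) (cfg_pos c). (x,w') \<in> (ch E (cfg_markers c))\<^sup>*)"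
    and "cfg_cost c = (\<Sum>p\<in>Pas E. w {fst p, snd p} * val (cfg_markers c p))"
proof -
  note Ic = assms[unfolded expl_inv_def]
  show "\<And>x y. {x,y}\<in>E \<Longrightarrow> okst (cfg_markers c (x,y), cfg_markers c (y,x))"
    using Ic[THEN conjunct1] by blast
  show "\<And>x y. {x,y}\<in>E \<Longrightarrow> cfg_markers c (x,y) \<noteq> Marker_Empty \<Longrightarrow>
             x \<in> cfg_visited c \<and> y \<in> cfg_visited c \<and> {x,y} \<in> cfg_trav c"
    using Ic[THEN conjunct2, THEN conjunct1] by blast
  show "\<And>a. cfg_pos c a \<in> cfg_visited c"
    using Ic[THEN conjunct2, THEN conjunct2, THEN conjunct1] by blast
  show "s \<in> cfg_visited c"
    using Ic[THEN conjunct2, THEN conjunct2, THEN conjunct2, THEN conjunct1] by blast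
  show "\<And>z. card (Bset E (cfg_markers c) z) \<le> nA (cfg_pos c) z"
    using Ic[THEN conjunct2, THEN conjunct2, THEN conjunct2, THEN conjunct2, THEN conjunct1] by blast
  show "\<And>x y y'. {x,y}\<in>E \<Longrightarrow> {x,y'}\<in>E \<Longrightarrow> cfg_markers c (x,y) = Marker_F \<Longrightarrow>
            cfg_markers c (x,y') = Marker_F \<Longrightarrow> y = y'"
    using Ic[THEN conjunct2, THEN conjunct2, THEN conjunct2, THEN conjunct2, THEN conjunct2, THEN conjunct1] by blast
  show "\<And>x. needs E (cfg_markers c) (cfg_visited c) x \<Longrightarrow>
            (\<exists>w'\<in>Wit E (cfg_markers c) (cfg_pos c). (x,w') \<in> (ch E (cfg_markers c))\<^sup>*)"
    using Ic[THEN conjunct2, THEN conjunct2, THEN conjunct2, THEN conjunct2, THEN conjunct2, THEN conjunct2, THEN conjunct1] by blast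
  show "cfg_cost c = (\<Sum>p\<in>Pas E. w {fst p, snd p} * val (cfg_markers c p))"
    using Ic[THEN conjunct2, THEN conjunct2, THEN conjunct2, THEN conjunct2, THEN conjunct2, THEN conjunct2, THEN conjunct2] by blast
qed

lemma needs_back:
  assumes n: "needs E (m((u,v):=X,(v,u):=Y)) (insert v vis) x" and vv: "v \<in> vis"
    and X: "X \<noteq> Marker_Empty" "X \<noteq> Marker_F" and Y: "Y \<noteq> Marker_Empty" "Y \<noteq> Marker_F"
  shows "needs E m vis x"
proof -
  obtain y where y: "{x,y} \<in> E" "(m((u,v):=X,(v,u):=Y)) (x,y) = Marker_Empty \<or> (m((u,v):=X,(v,u):=Y)) (x,y) = Marker_F"
    and xv: "x \<in> insert v vis"
    using n unfolding needs_def by blast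
  have "(x,y) \<noteq> (u,v)" "(x,y) \<noteq> (v,u)" using y X Y by (auto split: if_splits)
  then have "(m((u,v):=X,(v,u):=Y)) (x,y) = m (x,y)" by (rule upd2_other)
  then show ?thesis using y xv vv unfolding needs_def by auto
qed

lemma HP_DD:
  assumes G: "simple_graph V E" and I: "expl_inv E w s c" and pos: "cfg_pos c a = u"
    and e: "{u,v} \<in> E" and vv: "v \<in> cfg_visited c"
    and mdef: "m' = (cfg_markers c)((u,v):=Marker_D,(v,u):=Marker_D)"
    and noNF: "\<And>y. {u,y} \<in> E \<Longrightarrow> m' (u,y) \<noteq> Marker_Empty \<and> m' (u,y) \<noteq> Marker_F"
  shows "\<forall>x. needs E m' (insert v (cfg_visited c)) x \<longrightarrow>
               (\<exists>w'\<in>Wit E m' ((cfg_pos c)(a:=v)). (x,w') \<in> (ch E m')\<^sup>*)"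
proof (intro allI impI)
  let ?m = "cfg_markers c"
  fix x assume n': "needs E m' (insert v (cfg_visited c)) x"
  have uv: "u \<noteq> v" using sg_edge[OF G e] by blast
  have xu: "x \<noteq> u"
  proof
    assume "x = u"
    then show False using n' noNF unfolding needs_def by blast
  qed
  have n: "needs E ?m (cfg_visited c) x"
    using needs_back[of E ?m u v Marker_D Marker_D "cfg_visited c" x] n' vv mdef by simp
  obtain w' where w'W: "w' \<in> Wit E ?m (cfg_pos c)" and xw: "(x,w') \<in> (ch E ?m)\<^sup>*"
    using invD(7)[OF I n] by blast
  have chd: "ch E m' = ch E ?m - {(u,v)} - {(v,u)}"
    using ch_DD[OF uv, of Marker_D Marker_D E ?m] mdef by auto
  have noU: "\<And>t. (t,u) \<in> (ch E m')\<^sup>* \<Longrightarrow> t = u"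
  proof (rule ccontr)
    fix t assume "(t,u) \<in> (ch E m')\<^sup>*" "t \<noteq> u"
    then obtain q where "{u,q} \<in> E" "m' (u,q) = Marker_F" using into_pred_ch by metis
    then show False using noNF by blast
  qed
  have vW: "v \<in> Wit E m' ((cfg_pos c)(a:=v))"
  proof (rule v_Wit[OF uv pos invD(5)[OF I]])
    show "Bset E m' v \<subseteq> Bset E ?m v" using Bset_v2[OF uv, of Marker_D E ?m Marker_D] mdef by simp
    show "finite (Bset E ?m v)" by (rule finite_Bset[OF G])
  qed
  have cases3: "(x,w') \<in> (ch E m')\<^sup>* \<or> (x,v) \<in> (ch E m')\<^sup>* \<or> (x,u) \<in> (ch E m')\<^sup>*"
  proof -
    from rtrancl_remove[OF xw, of u v]
    have "(x,w') \<in> (ch E ?m - {(u,v)})\<^sup>* \<or> (x,u) \<in> (ch E ?m - {(u,v)})\<^sup>*" .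
    then show ?thesis
    proof
      assume "(x,w') \<in> (ch E ?m - {(u,v)})\<^sup>*"
      from rtrancl_remove[OF this, of v u] show ?thesis unfolding chd by blast
    next
      assume "(x,u) \<in> (ch E ?m - {(u,v)})\<^sup>*"
      from rtrancl_remove[OF this, of v u] show ?thesis unfolding chd by blast
    qed
  qed
  show "\<exists>w'\<in>Wit E m' ((cfg_pos c)(a:=v)). (x,w') \<in> (ch E m')\<^sup>*"
  proof -
    { assume "(x,u) \<in> (ch E m')\<^sup>*" then have False using noU xu by blast }
    moreover
    { assume h: "(x,w') \<in> (ch E m')\<^sup>*"
      have "w' \<noteq> u" using h noU xu by blast
      moreover have "w' = v \<or> w' \<in> Wit E m' ((cfg_pos c)(a:=v))"
        using Wit_keep[OF uv pos _ _ w'W, of Marker_D Marker_D] \<open>w' \<noteq> u\<close> mdef by auto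
      ultimately have ?thesis using h vW by auto }
    moreover
    { assume "(x,v) \<in> (ch E m')\<^sup>*" then have ?thesis using vW by blast }
    ultimately show ?thesis using cases3 by blast
  qed
qed


lemma val_simps: "val Marker_E = 1" "val Marker_D = 1" "val Marker_B = 0" "val Marker_F = 0"
  "val Marker_Empty = 0"
  by (simp_all add: val_def)

lemma okst_cases:
  "okst (Marker_B, Y) \<Longrightarrow> Y = Marker_E"
  "okst (Marker_F, Y) \<Longrightarrow> Y = Marker_E"
  "okst (Marker_Empty, Y) \<Longrightarrow> Y = Marker_Empty"
  "okst (Marker_E, Y) \<Longrightarrow> Y = Marker_B \<or> Y = Marker_F"
  by (auto simp: okst_def)

lemma step_row6:
  assumes G: "simple_graph V E" and I: "expl_inv E w s c" and u: "u = cfg_pos c a"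
    and nB: "\<not> has_marker E c u Marker_B" and n0: "\<not> has_marker E c u Marker_Empty"
    and nF: "\<not> has_marker E c u Marker_F" and e: "{u,v} \<in> E"
    and mE: "cfg_markers c (u,v) = Marker_E"
  shows "expl_inv E w s (traverse w c a u v ((cfg_markers c)((u,v):=Marker_D,(v,u):=Marker_D)))"
proof -
  let ?m = "cfg_markers c"
  let ?m' = "?m((u,v):=Marker_D,(v,u):=Marker_D)"
  have uv: "u \<noteq> v" using sg_edge[OF G e] by blast
  have e2: "{v,u} \<in> E" using e by (simp add: insert_commute)
  have vu: "?m (v,u) = Marker_B \<or> ?m (v,u) = Marker_F"
    using invD(1)[OF I e] mE okst_cases(4) by metis
  have vv: "v \<in> cfg_visited c" using invD(2)[OF I e] mE by simp
  have noNF: "\<And>y. {u,y} \<in> E \<Longrightarrow> ?m' (u,y) \<noteq> Marker_Empty \<and> ?m' (u,y) \<noteq> Marker_F"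
  proof -
    fix y assume y: "{u,y} \<in> E"
    show "?m' (u,y) \<noteq> Marker_Empty \<and> ?m' (u,y) \<noteq> Marker_F"
    proof (cases "y = v")
      case True then show ?thesis using uv by simp
    next
      case False
      then have "(u,y) \<noteq> (u,v)" "(u,y) \<noteq> (v,u)" using uv by auto
      then have "?m' (u,y) = ?m (u,y)" by (rule upd2_other)
      then show ?thesis using n0 nF y unfolding has_marker_def by auto
    qed
  qed
  have B0: "Bset E ?m u = {}" using nB unfolding has_marker_def Bset_def by blast
  show ?thesis
  proof (rule step_generic[OF G I u[symmetric] e refl])
    show "okst (Marker_D, Marker_D)" by (simp add: okst_def)
    show "Marker_D = Marker_E \<or> Marker_D = Marker_D" by simp
    show "val Marker_D + val Marker_D = val (?m (u,v)) + val (?m (v,u)) + 1"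
      using vu mE by (auto simp: val_simps)
    show "Bset E ?m u = {} \<or> v \<in> Bset E ?m u" using B0 by simp
    show "Marker_D = Marker_F \<Longrightarrow> \<forall>y. {v,y}\<in>E \<longrightarrow> ?m (v,y) = Marker_Empty" by simp
    show "\<forall>x. needs E ?m' (insert v (cfg_visited c)) x \<longrightarrow>
               (\<exists>w'\<in>Wit E ?m' ((cfg_pos c)(a:=v)). (x,w') \<in> (ch E ?m')\<^sup>*)"
      by (rule HP_DD[OF G I u[symmetric] e vv refl noNF])
  qed
qed

lemma step_row5:
  assumes G: "simple_graph V E" and I: "expl_inv E w s c" and u: "u = cfg_pos c a"
    and nB: "\<not> has_marker E c u Marker_B" and n0: "\<not> has_marker E c u Marker_Empty"
    and e: "{u,v} \<in> E" and mF: "cfg_markers c (u,v) = Marker_F"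
  shows "expl_inv E w s (traverse w c a u v ((cfg_markers c)((u,v):=Marker_D,(v,u):=Marker_D)))"
proof -
  let ?m = "cfg_markers c"
  let ?m' = "?m((u,v):=Marker_D,(v,u):=Marker_D)"
  have uv: "u \<noteq> v" using sg_edge[OF G e] by blast
  have vu: "?m (v,u) = Marker_E"
    using invD(1)[OF I e] mF okst_cases(2) by metis
  have vv: "v \<in> cfg_visited c" using invD(2)[OF I e] mF by simp
  have noNF: "\<And>y. {u,y} \<in> E \<Longrightarrow> ?m' (u,y) \<noteq> Marker_Empty \<and> ?m' (u,y) \<noteq> Marker_F"
  proof -
    fix y assume y: "{u,y} \<in> E"
    show "?m' (u,y) \<noteq> Marker_Empty \<and> ?m' (u,y) \<noteq> Marker_F"
    proof (cases "y = v")
      case True then show ?thesis using uv by simp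
    next
      case False
      then have "(u,y) \<noteq> (u,v)" "(u,y) \<noteq> (v,u)" using uv by auto
      then have eq: "?m' (u,y) = ?m (u,y)" by (rule upd2_other)
      have "?m (u,y) \<noteq> Marker_F" using invD(6)[OF I y e] mF False by blast
      then show ?thesis using eq n0 y unfolding has_marker_def by auto
    qed
  qed
  have B0: "Bset E ?m u = {}" using nB unfolding has_marker_def Bset_def by blast
  show ?thesis
  proof (rule step_generic[OF G I u[symmetric] e refl])
    show "okst (Marker_D, Marker_D)" by (simp add: okst_def)
    show "Marker_D = Marker_E \<or> Marker_D = Marker_D" by simp
    show "val Marker_D + val Marker_D = val (?m (u,v)) + val (?m (v,u)) + 1"
      using vu mF by (auto simp: val_simps)
    show "Bset E ?m u = {} \<or> v \<in> Bset E ?m u" using B0 by simp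
    show "Marker_D = Marker_F \<Longrightarrow> \<forall>y. {v,y}\<in>E \<longrightarrow> ?m (v,y) = Marker_Empty" by simp
    show "\<forall>x. needs E ?m' (insert v (cfg_visited c)) x \<longrightarrow>
               (\<exists>w'\<in>Wit E ?m' ((cfg_pos c)(a:=v)). (x,w') \<in> (ch E ?m')\<^sup>*)"
      by (rule HP_DD[OF G I u[symmetric] e vv refl noNF])
  qed
qed

lemma step_row1:
  assumes G: "simple_graph V E" and I: "expl_inv E w s c" and u: "u = cfg_pos c a"
    and e: "{u,v} \<in> E" and mB: "cfg_markers c (u,v) = Marker_B"
  shows "expl_inv E w s (traverse w c a u v ((cfg_markers c)((u,v):=Marker_D,(v,u):=Marker_D)))"
proof -
  let ?m = "cfg_markers c"
  let ?m' = "?m((u,v):=Marker_D,(v,u):=Marker_D)"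
  have uv: "u \<noteq> v" using sg_edge[OF G e] by blast
  have pos: "cfg_pos c a = u" using u by simp
  have vu: "?m (v,u) = Marker_E"
    using invD(1)[OF I e] mB okst_cases(1) by metis
  have vv: "v \<in> cfg_visited c" using invD(2)[OF I e] mB by simp
  have vB: "v \<in> Bset E ?m u" using e mB unfolding Bset_def by simp
  have fB: "\<And>m z. finite (Bset E m z)" using finite_Bset[OF G] .
  have HP: "\<forall>x. needs E ?m' (insert v (cfg_visited c)) x \<longrightarrow>
               (\<exists>w'\<in>Wit E ?m' ((cfg_pos c)(a:=v)). (x,w') \<in> (ch E ?m')\<^sup>*)"
  proof (intro allI impI)
    fix x assume n': "needs E ?m' (insert v (cfg_visited c)) x"
    have n: "needs E ?m (cfg_visited c) x"
      using needs_back[of E ?m u v Marker_D Marker_D "cfg_visited c" x] n' vv by simp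
    obtain w' where w'W: "w' \<in> Wit E ?m (cfg_pos c)" and xw: "(x,w') \<in> (ch E ?m)\<^sup>*"
      using invD(7)[OF I n] by blast
    have "ch E ?m' = ch E ?m - {(u,v),(v,u)}" using ch_DD[OF uv, of Marker_D Marker_D E ?m] by simp
    moreover have "(u,v) \<notin> ch E ?m" "(v,u) \<notin> ch E ?m" using vu mB unfolding ch_def by auto
    ultimately have chd: "ch E ?m' = ch E ?m" by blast
    have "w' \<in> Wit E ?m' ((cfg_pos c)(a:=v))"
    proof (cases "w' = v")
      case True
      have "v \<in> Wit E ?m' ((cfg_pos c)(a:=v))"
      proof (rule v_Wit[OF uv pos invD(5)[OF I]])
        show "Bset E ?m' v \<subseteq> Bset E ?m v" using Bset_v2[OF uv, of Marker_D E ?m Marker_D] by simp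
        show "finite (Bset E ?m v)" by (rule fB)
      qed
      then show ?thesis using True by simp
    next
      case wv: False
      show ?thesis
      proof (cases "w' = u")
        case False then show ?thesis using Wit_keep[OF uv pos False wv w'W] by simp
      next
        case True
        show ?thesis
        proof (cases "\<exists>z. {z,u} \<in> E \<and> ?m (z,u) = Marker_B")
          case True
          then obtain z where z: "{z,u} \<in> E" "?m (z,u) = Marker_B" by blast
          have "(z,u) \<noteq> (u,v)" "(z,u) \<noteq> (v,u)" using uv z vu by auto
          then have "?m' (z,u) = ?m (z,u)" by (rule upd2_other)
          then have mz: "?m' (z,u) = Marker_B" using z(2) by (rule trans)
          have "u \<in> Wit E ?m' ((cfg_pos c)(a:=v))" unfolding Wit_def using z(1) mz by blast
          then show ?thesis using \<open>w' = u\<close> by simp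
        next
          case False
          then have lt: "card (Bset E ?m u) < nA (cfg_pos c) u" using w'W True unfolding Wit_def by blast
          have b: "Bset E ?m' u = Bset E ?m u - {v}" using Bset_u[OF uv, of Marker_D E ?m Marker_D] by simp
          have c1: "card (Bset E ?m' u) = card (Bset E ?m u) - 1" using b vB fB by (simp add: card_Diff_singleton)
          have c2: "card (Bset E ?m u) \<ge> 1" using vB fB by (metis One_nat_def Suc_leI card_gt_0_iff empty_iff)
          have "card (Bset E ?m' u) < nA ((cfg_pos c)(a:=v)) u"
            using c1 c2 lt nA_u[where pos="cfg_pos c", OF pos uv] by linarith
          then show ?thesis using True unfolding Wit_def by blast
        qed
      qed
    qed
    then show "\<exists>w'\<in>Wit E ?m' ((cfg_pos c)(a:=v)). (x,w') \<in> (ch E ?m')\<^sup>*"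
      using xw chd by auto
  qed
  show ?thesis
  proof (rule step_generic[OF G I pos e refl])
    show "okst (Marker_D, Marker_D)" by (simp add: okst_def)
    show "Marker_D = Marker_E \<or> Marker_D = Marker_D" by simp
    show "val Marker_D + val Marker_D = val (?m (u,v)) + val (?m (v,u)) + 1"
      using vu mB by (auto simp: val_simps)
    show "Bset E ?m u = {} \<or> v \<in> Bset E ?m u" using vB by simp
    show "Marker_D = Marker_F \<Longrightarrow> \<forall>y. {v,y}\<in>E \<longrightarrow> ?m (v,y) = Marker_Empty" by simp
  qed (rule HP)
qed


lemma Bset_v_B: "u \<noteq> v \<Longrightarrow> {v,u} \<in> E \<Longrightarrow> Bset E (m((u,v):=X,(v,u):=Marker_B)) v = insert u (Bset E m v)"
  unfolding Bset_def by auto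

lemma step_row234:
  assumes G: "simple_graph V E" and I: "expl_inv E w s c" and u: "u = cfg_pos c a"
    and nB: "\<not> has_marker E c u Marker_B" and e: "{u,v} \<in> E"
    and m0: "cfg_markers c (u,v) = Marker_Empty"
    and mk1: "mk1 = (cfg_markers c)((u,v) := Marker_E)"
    and arr: "arr = (if mk1 (v,u) = Marker_E then Marker_D
             else if v \<in> cfg_visited c then Marker_B else Marker_F)"
  shows "expl_inv E w s (traverse w c a u v (mk1((v,u) := arr)))"
proof -
  let ?m = "cfg_markers c"
  have uv: "u \<noteq> v" using sg_edge[OF G e] by blast
  have pos: "cfg_pos c a = u" using u by simp
  have e2: "{v,u} \<in> E" using e by (simp add: insert_commute)
  have vu: "?m (v,u) = Marker_Empty"
    using invD(1)[OF I e] m0 okst_cases(3) by metis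
  have mk1vu: "mk1 (v,u) = Marker_Empty" using mk1 vu uv by simp
  have arr': "arr = (if v \<in> cfg_visited c then Marker_B else Marker_F)"
    using arr mk1vu by simp
  have mdef: "mk1((v,u) := arr) = ?m((u,v):=Marker_E,(v,u):=arr)" using mk1 by simp
  have B0: "Bset E ?m u = {}" using nB u unfolding has_marker_def Bset_def by blast
  have fB: "\<And>m z. finite (Bset E m z)" using finite_Bset[OF G] .
  show ?thesis
  proof (cases "v \<in> cfg_visited c")
    case vv: True
    then have aB: "arr = Marker_B" using arr' by simp
    let ?m' = "?m((u,v):=Marker_E,(v,u):=Marker_B)"
    have HP: "\<forall>x. needs E ?m' (insert v (cfg_visited c)) x \<longrightarrow>
               (\<exists>w'\<in>Wit E ?m' ((cfg_pos c)(a:=v)). (x,w') \<in> (ch E ?m')\<^sup>*)"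
    proof (intro allI impI)
      fix x assume n': "needs E ?m' (insert v (cfg_visited c)) x"
      have n: "needs E ?m (cfg_visited c) x"
        using needs_back[of E ?m u v Marker_E Marker_B "cfg_visited c" x] n' vv by simp
      obtain w' where w'W: "w' \<in> Wit E ?m (cfg_pos c)" and xw: "(x,w') \<in> (ch E ?m)\<^sup>*"
        using invD(7)[OF I n] by blast
      have "ch E ?m' = ch E ?m - {(u,v),(v,u)}" using ch_DD[OF uv, of Marker_E Marker_B E ?m] by simp
      moreover have "(u,v) \<notin> ch E ?m" "(v,u) \<notin> ch E ?m" using vu m0 unfolding ch_def by auto
      ultimately have chd: "ch E ?m' = ch E ?m" by blast
      have "w' \<in> Wit E ?m' ((cfg_pos c)(a:=v))"
      proof (cases "w' = u")
        case True
        have "?m' (v,u) = Marker_B" by simp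
        then have "u \<in> Wit E ?m' ((cfg_pos c)(a:=v))" unfolding Wit_def using e2 by blast
        then show ?thesis using True by simp
      next
        case wu: False
        show ?thesis
        proof (cases "w' = v")
          case False then show ?thesis using Wit_keep[OF uv pos wu False w'W] by simp
        next
          case True
          show ?thesis
          proof (cases "\<exists>z. {z,v} \<in> E \<and> ?m (z,v) = Marker_B")
            case True
            then obtain z where z: "{z,v} \<in> E" "?m (z,v) = Marker_B" by blast
            have "(z,v) \<noteq> (u,v)" "(z,v) \<noteq> (v,u)" using uv z m0 by auto
            then have "?m' (z,v) = ?m (z,v)" by (rule upd2_other)
            then have mz: "?m' (z,v) = Marker_B" using z(2) by (rule trans)
            have "v \<in> Wit E ?m' ((cfg_pos c)(a:=v))" unfolding Wit_def using z(1) mz by blast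
            then show ?thesis using \<open>w' = v\<close> by simp
          next
            case False
            then have lt: "card (Bset E ?m v) < nA (cfg_pos c) v" using w'W True unfolding Wit_def by blast
            have b: "Bset E ?m' v = insert u (Bset E ?m v)" using Bset_v_B[OF uv e2] by simp
            have "u \<notin> Bset E ?m v" using vu unfolding Bset_def by simp
            then have c1: "card (Bset E ?m' v) = card (Bset E ?m v) + 1" using b fB by simp
            have "card (Bset E ?m' v) < nA ((cfg_pos c)(a:=v)) v"
              using c1 lt nA_v[where pos="cfg_pos c", OF pos uv] by linarith
            then show ?thesis using True unfolding Wit_def by blast
          qed
        qed
      qed
      then show "\<exists>w'\<in>Wit E ?m' ((cfg_pos c)(a:=v)). (x,w') \<in> (ch E ?m')\<^sup>*"
        using xw chd by auto
    qed
    have "expl_inv E w s (traverse w c a u v ?m')"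
    proof (rule step_generic[OF G I pos e refl])
      show "okst (Marker_E, Marker_B)" by (simp add: okst_def)
      show "Marker_E = Marker_E \<or> Marker_E = Marker_D" by simp
      show "val Marker_E + val Marker_B = val (?m (u,v)) + val (?m (v,u)) + 1"
        using vu m0 by (auto simp: val_simps)
      show "Bset E ?m u = {} \<or> v \<in> Bset E ?m u" using B0 by simp
      show "Marker_B = Marker_F \<Longrightarrow> \<forall>y. {v,y}\<in>E \<longrightarrow> ?m (v,y) = Marker_Empty" by simp
    qed (rule HP)
    then show ?thesis using mdef aB by simp
  next
    case vv: False
    then have aF: "arr = Marker_F" using arr' by simp
    let ?m' = "?m((u,v):=Marker_E,(v,u):=Marker_F)"
    have fresh: "\<And>y. {v,y} \<in> E \<Longrightarrow> ?m (v,y) = Marker_Empty"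
      using invD(2)[OF I] vv by blast
    have vW: "v \<in> Wit E ?m' ((cfg_pos c)(a:=v))"
    proof (rule v_Wit[OF uv pos invD(5)[OF I]])
      show "Bset E ?m' v \<subseteq> Bset E ?m v" using Bset_v2[OF uv, of Marker_F E ?m Marker_E] by simp
      show "finite (Bset E ?m v)" by (rule fB)
    qed
    have HP: "\<forall>x. needs E ?m' (insert v (cfg_visited c)) x \<longrightarrow>
               (\<exists>w'\<in>Wit E ?m' ((cfg_pos c)(a:=v)). (x,w') \<in> (ch E ?m')\<^sup>*)"
    proof (intro allI impI)
      fix x assume n': "needs E ?m' (insert v (cfg_visited c)) x"
      show "\<exists>w'\<in>Wit E ?m' ((cfg_pos c)(a:=v)). (x,w') \<in> (ch E ?m')\<^sup>*"
      proof (cases "x = v")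
        case True then show ?thesis using vW by blast
      next
        case xv: False
        obtain y where y: "{x,y} \<in> E" "?m' (x,y) = Marker_Empty \<or> ?m' (x,y) = Marker_F"
          and xi: "x \<in> insert v (cfg_visited c)"
          using n' unfolding needs_def by blast
        have "(x,y) \<noteq> (u,v)" using y uv by auto
        moreover have "(x,y) \<noteq> (v,u)" using xv by auto
        ultimately have "?m' (x,y) = ?m (x,y)" by (rule upd2_other)
        then have n: "needs E ?m (cfg_visited c) x" using y xi xv unfolding needs_def by auto
        obtain w' where w'W: "w' \<in> Wit E ?m (cfg_pos c)" and xw: "(x,w') \<in> (ch E ?m)\<^sup>*"
          using invD(7)[OF I n] by blast
        have sub: "ch E ?m \<subseteq> ch E ?m'"
        proof
          fix p assume p: "p \<in> ch E ?m"
          obtain p1 p2 where pp: "p = (p1,p2)" by fastforce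
          have h: "{p1,p2} \<in> E" "?m (p2,p1) = Marker_F" using p pp unfolding ch_def by auto
          have "(p2,p1) \<noteq> (u,v)" "(p2,p1) \<noteq> (v,u)" using h m0 vu by auto
          then have "?m' (p2,p1) = ?m (p2,p1)" by (rule upd2_other)
          then show "p \<in> ch E ?m'" using h pp unfolding ch_def by simp
        qed
        have uvch: "(u,v) \<in> ch E ?m'" using e unfolding ch_def by simp
        have xw': "(x,w') \<in> (ch E ?m')\<^sup>*" using xw sub rtrancl_mono by blast
        show ?thesis
        proof (cases "w' = u")
          case True
          then have "(x,v) \<in> (ch E ?m')\<^sup>*" using xw' uvch by (meson rtrancl.rtrancl_into_rtrancl)
          then show ?thesis using vW by blast
        next
          case False
          have "w' \<in> cfg_visited c" using Wit_vis[OF I w'W] .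
          then have "w' \<noteq> v" using vv by blast
          then show ?thesis using Wit_keep[OF uv pos False _ w'W] xw' by blast
        qed
      qed
    qed
    have "expl_inv E w s (traverse w c a u v ?m')"
    proof (rule step_generic[OF G I pos e refl])
      show "okst (Marker_E, Marker_F)" by (simp add: okst_def)
      show "Marker_E = Marker_E \<or> Marker_E = Marker_D" by simp
      show "val Marker_E + val Marker_F = val (?m (u,v)) + val (?m (v,u)) + 1"
        using vu m0 by (auto simp: val_simps)
      show "Bset E ?m u = {} \<or> v \<in> Bset E ?m u" using B0 by simp
      show "Marker_F = Marker_F \<Longrightarrow> \<forall>y. {v,y}\<in>E \<longrightarrow> ?m (v,y) = Marker_Empty" using fresh by blast
    qed (rule HP)
    then show ?thesis using mdef aF by simp
  qed
qed


lemma step_inv: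
  assumes G: "simple_graph V E" and I: "expl_inv E w s c" and st: "explo_step E w a c c'"
  shows "expl_inv E w s c'"
  using st
proof (cases rule: explo_step.cases)
  case (row1 u v) then show ?thesis using step_row1[OF G I] by blast
next
  case (row234 u v mk1 arr) then show ?thesis using step_row234[OF G I] by blast
next
  case (row5 u v) then show ?thesis using step_row5[OF G I] by blast
next
  case (row6 u v) then show ?thesis using step_row6[OF G I] by blast
qed

lemma init_inv:
  assumes G: "simple_graph V E"
  shows "expl_inv E w s (init_cfg s)"
proof -
  have B: "\<And>z. Bset E (\<lambda>_. Marker_Empty) z = {}" unfolding Bset_def by simp
  have nAs: "nA (\<lambda>_. s) s = 2" unfolding nA_def by simp
  have W: "s \<in> Wit E (\<lambda>_. Marker_Empty) (\<lambda>_. s)" unfolding Wit_def using B nAs by simp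
  have N: "\<And>x. needs E (\<lambda>_. Marker_Empty) {s} x \<Longrightarrow> x = s" unfolding needs_def by simp
  show ?thesis unfolding expl_inv_def init_cfg_def
    using W N B by (auto simp: okst_def val_simps)
qed

lemma Pas_sum:
  fixes w :: "'v set \<Rightarrow> real"
  assumes G: "simple_graph V E"
  shows "(\<Sum>p\<in>Pas E. w {fst p, snd p}) = 2 * (\<Sum>e\<in>E. w e)"
proof -
  have fP: "finite (Pas E)" by (rule finite_Pas[OF G])
  have fE: "finite E" by (rule sg_finite(1)[OF G])
  have img: "(\<lambda>p. {fst p, snd p}) ` Pas E \<subseteq> E" unfolding Pas_def by auto
  have "(\<Sum>p\<in>Pas E. w {fst p, snd p}) =
        (\<Sum>e\<in>E. \<Sum>p\<in>{p. p \<in> Pas E \<and> {fst p, snd p} = e}. w {fst p, snd p})"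
    using sum.group[OF fP fE img, of "\<lambda>p. w {fst p, snd p}"] by simp
  also have "\<dots> = (\<Sum>e\<in>E. 2 * w e)"
  proof (rule sum.cong[OF refl])
    fix e assume eE: "e \<in> E"
    obtain a b where ab: "e = {a,b}" "a \<noteq> b"
      using eE G unfolding simple_graph_def by blast
    have set: "{p. p \<in> Pas E \<and> {fst p, snd p} = e} = {(a,b),(b,a)}"
    proof (intro set_eqI iffI)
      fix p assume "p \<in> {p. p \<in> Pas E \<and> {fst p, snd p} = e}"
      then have "{fst p, snd p} = {a,b}" using ab by simp
      then have "(fst p = a \<and> snd p = b) \<or> (fst p = b \<and> snd p = a)" by (simp add: doubleton_eq_iff)
      then show "p \<in> {(a,b),(b,a)}" by (cases p) auto
    next
      fix p assume "p \<in> {(a,b),(b,a)}"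
      then show "p \<in> {p. p \<in> Pas E \<and> {fst p, snd p} = e}"
        using eE ab unfolding Pas_def by (auto simp: insert_commute)
    qed
    have "(\<Sum>p\<in>{(a,b),(b,a)}. w {fst p, snd p}) = w {a,b} + w {b,a}"
      using ab(2) by simp
    also have "\<dots> = 2 * w e" using ab by (simp add: insert_commute)
    finally show "(\<Sum>p\<in>{p. p \<in> Pas E \<and> {fst p, snd p} = e}. w {fst p, snd p}) = 2 * w e"
      using set by simp
  qed
  also have "\<dots> = 2 * (\<Sum>e\<in>E. w e)" by (simp add: sum_distrib_left)
  finally show ?thesis .
qed

lemma cost_bound:
  fixes w :: "'v set \<Rightarrow> real"
  assumes G: "simple_graph V E" and wp: "\<forall>e\<in>E. w e > 0" and I: "expl_inv E w s c"
  shows "cfg_cost c \<le> 2 * (\<Sum>e\<in>E. w e)"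
proof -
  have "cfg_cost c = (\<Sum>p\<in>Pas E. w {fst p, snd p} * val (cfg_markers c p))" by (rule invD(8)[OF I])
  also have "\<dots> \<le> (\<Sum>p\<in>Pas E. w {fst p, snd p})"
  proof (rule sum_mono)
    fix p assume "p \<in> Pas E"
    then have "w {fst p, snd p} > 0" using wp unfolding Pas_def by auto
    moreover have "val (cfg_markers c p) \<le> 1" "val (cfg_markers c p) \<ge> 0" by (auto simp: val_def)
    ultimately show "w {fst p, snd p} * val (cfg_markers c p) \<le> w {fst p, snd p}"
      by (simp add: mult_left_le)
  qed
  also have "\<dots> = 2 * (\<Sum>e\<in>E. w e)" by (rule Pas_sum[OF G])
  finally show ?thesis .
qed

lemma agent_D:
  assumes G: "simple_graph V E" and ns: "\<not> (\<exists>c'. async_step E w c c')"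
    and e: "{cfg_pos c a, y} \<in> E"
  shows "cfg_markers c (cfg_pos c a, y) = Marker_D"
proof (rule ccontr)
  let ?u = "cfg_pos c a"
  let ?m = "cfg_markers c"
  assume nD: "?m (?u, y) \<noteq> Marker_D"
  have nostep: "\<And>c'. \<not> explo_step E w a c c'" using ns unfolding async_step_def by blast
  show False
  proof (cases "has_marker E c ?u Marker_B")
    case True
    then obtain v where v: "{?u,v} \<in> E" "?m (?u,v) = Marker_B" unfolding has_marker_def by blast
    show False by (rule notE[OF nostep explo_step.row1[OF refl v]])
  next
    case nB: False
    show False
    proof (cases "has_marker E c ?u Marker_Empty")
      case True
      then obtain v where v: "{?u,v} \<in> E" "?m (?u,v) = Marker_Empty" unfolding has_marker_def by blast
      show False by (rule notE[OF nostep explo_step.row234[OF refl nB v refl refl]])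
    next
      case n0: False
      show False
      proof (cases "has_marker E c ?u Marker_F")
        case True
        then obtain v where v: "{?u,v} \<in> E" "?m (?u,v) = Marker_F" unfolding has_marker_def by blast
        show False by (rule notE[OF nostep explo_step.row5[OF refl nB n0 v]])
      next
        case nF: False
        show False
        proof (cases "has_marker E c ?u Marker_E")
          case True
          then obtain v where v: "{?u,v} \<in> E" "?m (?u,v) = Marker_E" unfolding has_marker_def by blast
          show False by (rule notE[OF nostep explo_step.row6[OF refl nB n0 nF v]])
        next
          case nE: False
          have "?m (?u, y) = Marker_B \<or> ?m (?u, y) = Marker_Empty \<or> ?m (?u, y) = Marker_F \<or> ?m (?u, y) = Marker_E"
            using nD by (cases "?m (?u, y)") auto
          moreover have "\<And>M. ?m (?u, y) = M \<Longrightarrow> has_marker E c ?u M"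
            using e unfolding has_marker_def by blast
          ultimately show False using nB n0 nF nE by metis
        qed
      qed
    qed
  qed
qed

lemma stuck_explored:
  assumes G: "simple_graph V E" and C: "connected_graph V E" and sV: "s \<in> V"
    and I: "expl_inv E w s c" and ns: "\<not> (\<exists>c'. async_step E w c c')"
  shows "E \<subseteq> cfg_trav c"
proof -
  let ?m = "cfg_markers c"
  let ?vis = "cfg_visited c"
  have S1: "\<And>a y. {cfg_pos c a, y} \<in> E \<Longrightarrow> ?m (cfg_pos c a, y) = Marker_D"
    using agent_D[OF G ns] by blast
  have S2: "\<And>z y. {z,y} \<in> E \<Longrightarrow> ?m (z,y) \<noteq> Marker_B"
  proof
    fix z y assume zy: "{z,y} \<in> E" "?m (z,y) = Marker_B"
    then have "y \<in> Bset E ?m z" unfolding Bset_def by simp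
    then have "card (Bset E ?m z) > 0" using finite_Bset[OF G] card_gt_0_iff by blast
    then have "nA (cfg_pos c) z > 0" using invD(5)[OF I, of z] by linarith
    then obtain a where "cfg_pos c a = z" unfolding nA_def
      by (metis (mono_tags, lifting) card.empty empty_Collect_eq less_irrefl)
    then show False using S1 zy by fastforce
  qed
  have S3: "\<And>x. x \<in> Wit E ?m (cfg_pos c) \<Longrightarrow> \<exists>a. cfg_pos c a = x"
  proof -
    fix x assume "x \<in> Wit E ?m (cfg_pos c)"
    then have "card (Bset E ?m x) < nA (cfg_pos c) x" using S2 unfolding Wit_def by blast
    then have "nA (cfg_pos c) x > 0" by linarith
    then show "\<exists>a. cfg_pos c a = x" unfolding nA_def
      by (metis (mono_tags, lifting) card.empty empty_Collect_eq less_irrefl)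
  qed
  have S4: "\<And>x. \<not> needs E ?m ?vis x"
  proof
    fix x assume n: "needs E ?m ?vis x"
    obtain w' where w'W: "w' \<in> Wit E ?m (cfg_pos c)" and xw: "(x,w') \<in> (ch E ?m)\<^sup>*"
      using invD(7)[OF I n] by blast
    obtain a where a: "cfg_pos c a = w'" using S3[OF w'W] by blast
    show False
    proof (cases "x = w'")
      case True
      then obtain y where "{x,y} \<in> E" "?m (x,y) = Marker_Empty \<or> ?m (x,y) = Marker_F"
        using n unfolding needs_def by blast
      then show False using S1[of a y] a True by auto
    next
      case False
      then obtain q where "{w',q} \<in> E" "?m (w',q) = Marker_F" using into_pred_ch[OF xw] by blast
      then show False using S1[of a q] a by auto
    qed
  qed
  have S5: "\<And>x y. x \<in> ?vis \<Longrightarrow> {x,y} \<in> E \<Longrightarrow> ?m (x,y) = Marker_D"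
  proof -
    fix x y assume xv: "x \<in> ?vis" and xy: "{x,y} \<in> E"
    have n0: "?m (x,y) \<noteq> Marker_Empty" "?m (x,y) \<noteq> Marker_F"
      using S4[of x] xv xy unfolding needs_def by auto
    have nB: "?m (x,y) \<noteq> Marker_B" using S2[OF xy] .
    have nE: "?m (x,y) \<noteq> Marker_E"
    proof
      assume mE: "?m (x,y) = Marker_E"
      have yx: "{y,x} \<in> E" using xy by (simp add: insert_commute)
      have "?m (y,x) = Marker_B \<or> ?m (y,x) = Marker_F"
        using invD(1)[OF I xy] mE okst_cases(4) by metis
      moreover have "?m (y,x) \<noteq> Marker_B" using S2[OF yx] .
      moreover have "y \<in> ?vis" using invD(2)[OF I xy] mE by simp
      ultimately show False using S4[of y] yx unfolding needs_def by auto
    qed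
    show "?m (x,y) = Marker_D" using n0 nB nE by (cases "?m (x,y)") auto
  qed
  have S6: "\<And>v. v \<in> V \<Longrightarrow> v \<in> ?vis"
  proof -
    fix v assume vV: "v \<in> V"
    have "(s,v) \<in> (adj E)\<^sup>*" using C sV vV unfolding connected_graph_def by blast
    then show "v \<in> ?vis"
    proof (induction rule: rtrancl_induct)
      case base then show ?case using invD(4)[OF I] .
    next
      case (step y z)
      then have yz: "{y,z} \<in> E" unfolding adj_def by simp
      then have "?m (y,z) = Marker_D" using S5 step.IH by blast
      then show ?case using invD(2)[OF I yz] by simp
    qed
  qed
  show ?thesis
  proof
    fix e assume eE: "e \<in> E"
    obtain a b where ab: "e = {a,b}" "a \<in> V" "b \<in> V" using eE G unfolding simple_graph_def by blast
    have "a \<in> ?vis" using S6 ab by blast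
    then have "?m (a,b) = Marker_D" using S5 eE ab by blast
    then show "e \<in> cfg_trav c" using invD(2)[OF I, of a b] eE ab by simp
  qed
qed

theorem proposition19:
  fixes V :: "'v set" and E :: "'v set set" and w :: "'v set \<Rightarrow> real" and s :: 'v
  assumes "simple_graph V E" and "connected_graph V E" and "s \<in> V"
    and "\<forall>e\<in>E. w e > 0"
  shows "\<forall>c. (async_step E w)\<^sup>*\<^sup>* (init_cfg s) c \<longrightarrow>
            cfg_cost c \<le> 2 * (\<Sum>e\<in>E. w e) \<and>
            ((\<nexists>c'. async_step E w c c') \<longrightarrow> E \<subseteq> cfg_trav c)"
proof (intro allI impI)
  fix c assume r: "(async_step E w)\<^sup>*\<^sup>* (init_cfg s) c"
  have I: "expl_inv E w s c"
    using r
  proof (induction rule: rtranclp_induct)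
    case base then show ?case by (rule init_inv[OF assms(1)])
  next
    case (step y z)
    then obtain a where "explo_step E w a y z" unfolding async_step_def by blast
    then show ?case using step_inv[OF assms(1) step.IH] by blast
  qed
  show "cfg_cost c \<le> 2 * (\<Sum>e\<in>E. w e) \<and> ((\<nexists>c'. async_step E w c c') \<longrightarrow> E \<subseteq> cfg_trav c)"
    using cost_bound[OF assms(1) assms(4) I] stuck_explored[OF assms(1) assms(2) assms(3) I] by blast
qed

end
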